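(* Let $\Theta$ be an S4K-logic characterised by a class $\mathcal C$ of general S4K-frames (i.e. $\chi\in\Theta$ iff every $\mathfrak F\in\mathcal C$ validates $\chi$). Then the iA-logic $\rho\Theta=\{\varphi\in\mathcal L_{\multimap}\mid t(\varphi)\in\Theta\}$ is characterised by the class $\hat\rho\mathcal C=\{\hat\rho\mathfrak F\mid\mathfrak F\in\mathcal C\}$ of general $\multimap$-frames.
   Context: $\mathcal L_{i,m}$: classical bimodal language with $\Box_i,\Box_m$. An S4K-logic is a set of $\mathcal L_{i,m}$-formulae containing all classical tautologies, the $\mathsf K$ axioms for $\Box_i$ and $\Box_m$, and $\Box_ip\to p$, $\Box_ip\to\Box_i\Box_ip$, closed under modus ponens, necessitation for both boxes and uniform substitution. The translation $t:\mathcal L_{\multimap}\to\mathcal L_{i,m}$: $t(p)=\Box_ip$, $t(\top)=\top$, $t(\bot)=\bot$, $t(\varphi\star\psi)=\Box_i(t\varphi\star t\psi)$ for $\star\in\{\wedge,\vee,\to\}$, $t(\varphi\multimap\psi)=\Box_i\Box_m(t\varphi\to t\psi)$. General S4K-frames $(X,R_i,R_m,P)$: $R_i$ preorder, $P$ a Boolean subalgebra of $\mathcal P(X)$ closed under $[i]$ and $[m]$ (universal modalities along $R_i$, $R_m$); validity uses valuations into $P$. $\hat\rho\mathfrak F:=([X],[R_i],[R_m^*],\hat\rho P)$ where $xR_m^*z$ iff $\exists y(xR_iy\wedge yR_mz)$; $[x]$ is the class of $x$ under $x\sim y\iff xR_iy\wedge yR_ix$; $[x][R_i][y]$ iff $xR_iy$;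 $[x][R_m^*][y]$ iff $xR_m^*y'$ for some $y'\sim y$; $\hat\rho P=\{\{[x]\mid x\in[i]b\}\mid b\in P\}$. Validity in a general $\multimap$-frame $(Y,\preceq,\sqsubset,Q)$: under all valuations into $Q$ the truth set is $Y$, with $\to$ interpreted along $\preceq$ and $\multimap$ along $\sqsubset$ ($a\Rrightarrow b=\{x\mid\forall y(x\sqsubset y,y\in a\Rightarrow y\in b)\}$). *)

theory Defs
  imports Main
begin

datatype mfm = MVar nat | MTop | MBot | MNeg mfm | MAnd mfm mfm | MOr mfm mfm
  | MImp mfm mfm | BoxI mfm | BoxM mfm

fun msubst :: "(nat \<Rightarrow> mfm) \<Rightarrow> mfm \<Rightarrow> mfm" where
  "msubst s (MVar p) = s p"
| "msubst s MTop = MTop"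
| "msubst s MBot = MBot"
| "msubst s (MNeg a) = MNeg (msubst s a)"
| "msubst s (MAnd a b) = MAnd (msubst s a) (msubst s b)"
| "msubst s (MOr a b) = MOr (msubst s a) (msubst s b)"
| "msubst s (MImp a b) = MImp (msubst s a) (msubst s b)"
| "msubst s (BoxI a) = BoxI (msubst s a)"
| "msubst s (BoxM a) = BoxM (msubst s a)"

text \<open>Classical tautologies: true under every Boolean valuation, with modal
  subformulas treated as atoms.\<close>
fun bool_eval :: "(mfm \<Rightarrow> bool) \<Rightarrow> mfm \<Rightarrow> bool" where
  "bool_eval v (MVar p) = v (MVar p)"
| "bool_eval v MTop = True"
| "bool_eval v MBot = False"
| "bool_eval v (MNeg a) = (\<not> bool_eval v a)"
| "bool_eval v (MAnd a b) = (bool_eval v a \<and> bool_eval v b)"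
| "bool_eval v (MOr a b) = (bool_eval v a \<or> bool_eval v b)"
| "bool_eval v (MImp a b) = (bool_eval v a \<longrightarrow> bool_eval v b)"
| "bool_eval v (BoxI a) = v (BoxI a)"
| "bool_eval v (BoxM a) = v (BoxM a)"

definition tautology :: "mfm \<Rightarrow> bool" where
  "tautology a \<longleftrightarrow> (\<forall>v. bool_eval v a)"

definition S4K_logic :: "mfm set \<Rightarrow> bool" where
  "S4K_logic L \<longleftrightarrow>
     (\<forall>a. tautology a \<longrightarrow> a \<in> L)
   \<and> (\<forall>a b. MImp (BoxI (MImp a b)) (MImp (BoxI a) (BoxI b)) \<in> L)
   \<and> (\<forall>a b. MImp (BoxM (MImp a b)) (MImp (BoxM a) (BoxM b)) \<in> L)
   \<and> MImp (BoxI (MVar 0)) (MVar 0) \<in> L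
   \<and> MImp (BoxI (MVar 0)) (BoxI (BoxI (MVar 0))) \<in> L
   \<and> (\<forall>a b. a \<in> L \<longrightarrow> MImp a b \<in> L \<longrightarrow> b \<in> L)
   \<and> (\<forall>a. a \<in> L \<longrightarrow> BoxI a \<in> L)
   \<and> (\<forall>a. a \<in> L \<longrightarrow> BoxM a \<in> L)
   \<and> (\<forall>a s. a \<in> L \<longrightarrow> msubst s a \<in> L)"

datatype ifm = IVar nat | ITop | IBot | IAnd ifm ifm | IOr ifm ifm | IImp ifm ifm
  | ILolli ifm ifm

fun trans_t :: "ifm \<Rightarrow> mfm" where
  "trans_t (IVar p) = BoxI (MVar p)"
| "trans_t ITop = MTop"
| "trans_t IBot = MBot"
| "trans_t (IAnd a b) = BoxI (MAnd (trans_t a) (trans_t b))"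
| "trans_t (IOr a b) = BoxI (MOr (trans_t a) (trans_t b))"
| "trans_t (IImp a b) = BoxI (MImp (trans_t a) (trans_t b))"
| "trans_t (ILolli a b) = BoxI (BoxM (MImp (trans_t a) (trans_t b)))"

definition rho_logic :: "mfm set \<Rightarrow> ifm set" where
  "rho_logic L = {\<phi>. trans_t \<phi> \<in> L}"

record 'a s4k_frame =
  carrier :: "'a set"
  Ri :: "('a \<times> 'a) set"
  Rm :: "('a \<times> 'a) set"
  Adm :: "'a set set"

definition box_rel :: "'a set \<Rightarrow> ('a \<times> 'a) set \<Rightarrow> 'a set \<Rightarrow> 'a set" where
  "box_rel X R a = {x \<in> X. \<forall>y. (x, y) \<in> R \<longrightarrow> y \<in> a}"

definition general_S4K_frame :: "'a s4k_frame \<Rightarrow> bool" where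
  "general_S4K_frame F \<longleftrightarrow>
     Ri F \<subseteq> carrier F \<times> carrier F \<and> Rm F \<subseteq> carrier F \<times> carrier F
   \<and> (\<forall>x\<in>carrier F. (x, x) \<in> Ri F) \<and> trans (Ri F)
   \<and> Adm F \<subseteq> Pow (carrier F)
   \<and> carrier F \<in> Adm F
   \<and> (\<forall>a\<in>Adm F. carrier F - a \<in> Adm F)
   \<and> (\<forall>a\<in>Adm F. \<forall>b\<in>Adm F. a \<inter> b \<in> Adm F)
   \<and> (\<forall>a\<in>Adm F. box_rel (carrier F) (Ri F) a \<in> Adm F)
   \<and> (\<forall>a\<in>Adm F. box_rel (carrier F) (Rm F) a \<in> Adm F)"

fun mtruth :: "'a s4k_frame \<Rightarrow> (nat \<Rightarrow> 'a set) \<Rightarrow> mfm \<Rightarrow> 'a set" where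
  "mtruth F V (MVar p) = V p"
| "mtruth F V MTop = carrier F"
| "mtruth F V MBot = {}"
| "mtruth F V (MNeg a) = carrier F - mtruth F V a"
| "mtruth F V (MAnd a b) = mtruth F V a \<inter> mtruth F V b"
| "mtruth F V (MOr a b) = mtruth F V a \<union> mtruth F V b"
| "mtruth F V (MImp a b) = (carrier F - mtruth F V a) \<union> mtruth F V b"
| "mtruth F V (BoxI a) = box_rel (carrier F) (Ri F) (mtruth F V a)"
| "mtruth F V (BoxM a) = box_rel (carrier F) (Rm F) (mtruth F V a)"

definition mvalid :: "'a s4k_frame \<Rightarrow> mfm \<Rightarrow> bool" where
  "mvalid F a \<longleftrightarrow> (\<forall>V. (\<forall>p. V p \<in> Adm F) \<longrightarrow> mtruth F V a = carrier F)"

record 'b lolli_frame =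
  lcarrier :: "'b set"
  leq :: "('b \<times> 'b) set"
  lrel :: "('b \<times> 'b) set"
  ladm :: "'b set set"

definition rel_imp :: "'b set \<Rightarrow> ('b \<times> 'b) set \<Rightarrow> 'b set \<Rightarrow> 'b set \<Rightarrow> 'b set" where
  "rel_imp Y R a b = {x \<in> Y. \<forall>y. (x, y) \<in> R \<longrightarrow> y \<in> a \<longrightarrow> y \<in> b}"

fun itruth :: "'b lolli_frame \<Rightarrow> (nat \<Rightarrow> 'b set) \<Rightarrow> ifm \<Rightarrow> 'b set" where
  "itruth G V (IVar p) = V p"
| "itruth G V ITop = lcarrier G"
| "itruth G V IBot = {}"
| "itruth G V (IAnd a b) = itruth G V a \<inter> itruth G V b"
| "itruth G V (IOr a b) = itruth G V a \<union> itruth G V b"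
| "itruth G V (IImp a b) = rel_imp (lcarrier G) (leq G) (itruth G V a) (itruth G V b)"
| "itruth G V (ILolli a b) = rel_imp (lcarrier G) (lrel G) (itruth G V a) (itruth G V b)"

definition ivalid :: "'b lolli_frame \<Rightarrow> ifm \<Rightarrow> bool" where
  "ivalid G a \<longleftrightarrow> (\<forall>V. (\<forall>p. V p \<in> ladm G) \<longrightarrow> itruth G V a = lcarrier G)"

definition cls :: "'a s4k_frame \<Rightarrow> 'a \<Rightarrow> 'a set" where
  "cls F x = {y \<in> carrier F. (x, y) \<in> Ri F \<and> (y, x) \<in> Ri F}"

definition Rm_star :: "'a s4k_frame \<Rightarrow> ('a \<times> 'a) set" where
  "Rm_star F = {(x, z). \<exists>y. (x, y) \<in> Ri F \<and> (y, z) \<in> Rm F}"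

definition rho_hat :: "'a s4k_frame \<Rightarrow> 'a set lolli_frame" where
  "rho_hat F = \<lparr> lcarrier = cls F ` carrier F,
     leq = {(cls F x, cls F y) | x y. x \<in> carrier F \<and> y \<in> carrier F \<and> (x, y) \<in> Ri F},
     lrel = {(cls F x, cls F y) | x y. x \<in> carrier F \<and> y \<in> carrier F \<and>
               (\<exists>y'. y' \<in> cls F y \<and> (x, y') \<in> Rm_star F)},
     ladm = {cls F ` box_rel (carrier F) (Ri F) b | b. b \<in> Adm F} \<rparr>"

end

theory Submission
  imports Defs
begin

definition up :: "'a s4k_frame \<Rightarrow> 'a set \<Rightarrow> bool" where
  "up F U \<longleftrightarrow> U \<subseteq> carrier F \<and> (\<forall>x y. x \<in> U \<longrightarrow> (x, y) \<in> Ri F \<longrightarrow> y \<in> U)"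

lemma gen_facts:
  assumes "general_S4K_frame F"
  shows "Ri F \<subseteq> carrier F \<times> carrier F" "Rm F \<subseteq> carrier F \<times> carrier F"
    "\<And>x. x \<in> carrier F \<Longrightarrow> (x, x) \<in> Ri F" "trans (Ri F)"
  using assms unfolding general_S4K_frame_def by auto

lemma cls_self: "general_S4K_frame F \<Longrightarrow> x \<in> carrier F \<Longrightarrow> x \<in> cls F x"
  using gen_facts(3) unfolding cls_def by auto

lemma cls_eq:
  assumes g: "general_S4K_frame F" and "x \<in> carrier F" "y \<in> carrier F"
  shows "cls F x = cls F y \<longleftrightarrow> (x, y) \<in> Ri F \<and> (y, x) \<in> Ri F"
proof
  assume "cls F x = cls F y"
  then have "x \<in> cls F y" using cls_self[OF g assms(2)] by simp
  then show "(x, y) \<in> Ri F \<and> (y, x) \<in> Ri F" unfolding cls_def by auto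
next
  assume h: "(x, y) \<in> Ri F \<and> (y, x) \<in> Ri F"
  have t: "trans (Ri F)" using gen_facts(4)[OF g] .
  show "cls F x = cls F y" unfolding cls_def using h t by (auto dest: transD)
qed

lemma up_cls:
  assumes g: "general_S4K_frame F" and u: "up F U" and x: "x \<in> carrier F"
  shows "cls F x \<in> cls F ` U \<longleftrightarrow> x \<in> U"
proof
  assume "cls F x \<in> cls F ` U"
  then obtain y where y: "y \<in> U" "cls F x = cls F y" by auto
  have "y \<in> carrier F" using u y unfolding up_def by auto
  then have "(y, x) \<in> Ri F" using cls_eq[OF g x] y by auto
  then show "x \<in> U" using u y unfolding up_def by auto
qed auto

lemma up_box: "general_S4K_frame F \<Longrightarrow> up F (box_rel (carrier F) (Ri F) S)"
  using gen_facts[of F] unfolding up_def box_rel_def by (auto dest: transD)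

lemma box_up: "general_S4K_frame F \<Longrightarrow> up F U \<Longrightarrow> box_rel (carrier F) (Ri F) U = U"
  unfolding up_def box_rel_def using gen_facts(3)[of F] by blast

lemma up_int: "up F A \<Longrightarrow> up F B \<Longrightarrow> up F (A \<inter> B)"
  unfolding up_def by blast

lemma up_un: "up F A \<Longrightarrow> up F B \<Longrightarrow> up F (A \<union> B)"
  unfolding up_def by blast

lemma leq_iff:
  assumes g: "general_S4K_frame F" and x: "x \<in> carrier F" and y: "y \<in> carrier F"
  shows "(cls F x, cls F y) \<in> leq (rho_hat F) \<longleftrightarrow> (x, y) \<in> Ri F"
proof
  assume "(cls F x, cls F y) \<in> leq (rho_hat F)"
  then obtain x' y' where h: "cls F x = cls F x'" "cls F y = cls F y'" "x' \<in> carrier F"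
    "y' \<in> carrier F" "(x', y') \<in> Ri F"
    unfolding rho_hat_def by auto
  have "(x, x') \<in> Ri F" "(y', y) \<in> Ri F" using cls_eq[OF g] h x y by auto
  then show "(x, y) \<in> Ri F" using h gen_facts(4)[OF g] by (meson transD)
next
  assume "(x, y) \<in> Ri F" then show "(cls F x, cls F y) \<in> leq (rho_hat F)"
    using x y unfolding rho_hat_def by auto
qed

lemma leq_range: "(c, d) \<in> leq (rho_hat F) \<Longrightarrow> \<exists>y\<in>carrier F. d = cls F y"
  unfolding rho_hat_def by auto

lemma lrel_range: "(c, d) \<in> lrel (rho_hat F) \<Longrightarrow> \<exists>y\<in>carrier F. d = cls F y"
  unfolding rho_hat_def by auto

lemma lrel_iff:
  assumes g: "general_S4K_frame F" and x: "x \<in> carrier F" and y: "y \<in> carrier F"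
  shows "(cls F x, cls F y) \<in> lrel (rho_hat F) \<longleftrightarrow> (\<exists>y'. y' \<in> cls F y \<and> (x, y') \<in> Rm_star F)"
proof
  assume "(cls F x, cls F y) \<in> lrel (rho_hat F)"
  then obtain x' y' y'' where h: "cls F x = cls F x'" "cls F y = cls F y'" "x' \<in> carrier F"
    "y' \<in> carrier F" "y'' \<in> cls F y'" "(x', y'') \<in> Rm_star F"
    unfolding rho_hat_def by auto
  have "(x, x') \<in> Ri F" using cls_eq[OF g] h x by auto
  then have "(x, y'') \<in> Rm_star F" using h(6) gen_facts(4)[OF g]
    unfolding Rm_star_def by (auto dest: transD)
  then show "\<exists>y'. y' \<in> cls F y \<and> (x, y') \<in> Rm_star F" using h by auto
next
  assume "\<exists>y'. y' \<in> cls F y \<and> (x, y') \<in> Rm_star F"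
  then show "(cls F x, cls F y) \<in> lrel (rho_hat F)"
    using x y unfolding rho_hat_def by auto
qed

lemma truth:
  assumes g: "general_S4K_frame F"
    and W: "\<forall>p. W p = cls F ` box_rel (carrier F) (Ri F) (V p)"
  shows "up F (mtruth F V (trans_t \<phi>)) \<and> itruth (rho_hat F) W \<phi> \<subseteq> cls F ` carrier F
     \<and> (\<forall>x\<in>carrier F. cls F x \<in> itruth (rho_hat F) W \<phi> \<longleftrightarrow> x \<in> mtruth F V (trans_t \<phi>))"
proof (induction \<phi>)
  case (IVar p)
  then show ?case using W up_box[OF g] up_cls[OF g up_box[OF g]]
    by (auto simp: box_rel_def)
next
  case ITop
  then show ?case by (auto simp: up_def rho_hat_def dest: subsetD[OF gen_facts(1)[OF g]])
next
  case IBot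
  then show ?case by (auto simp: up_def)
next
  case (IAnd a b)
  then have e: "mtruth F V (trans_t (IAnd a b)) = mtruth F V (trans_t a) \<inter> mtruth F V (trans_t b)"
    using box_up[OF g up_int] IAnd by simp
  show ?case by (unfold e) (use IAnd up_int in auto)
next
  case (IOr a b)
  then have e: "mtruth F V (trans_t (IOr a b)) = mtruth F V (trans_t a) \<union> mtruth F V (trans_t b)"
    using box_up[OF g up_un] IOr by simp
  show ?case by (unfold e) (use IOr up_un in auto)
next
  case (IImp a b)
  let ?A = "mtruth F V (trans_t a)" and ?B = "mtruth F V (trans_t b)"
  let ?IA = "itruth (rho_hat F) W a" and ?IB = "itruth (rho_hat F) W b"
  have sub: "itruth (rho_hat F) W (IImp a b) \<subseteq> cls F ` carrier F"
    by (auto simp: rel_imp_def rho_hat_def)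
  have "cls F x \<in> itruth (rho_hat F) W (IImp a b) \<longleftrightarrow> x \<in> mtruth F V (trans_t (IImp a b))"
    if x: "x \<in> carrier F" for x
  proof
    assume h: "cls F x \<in> itruth (rho_hat F) W (IImp a b)"
    show "x \<in> mtruth F V (trans_t (IImp a b))"
      unfolding trans_t.simps mtruth.simps box_rel_def
    proof (intro CollectI conjI allI impI x)
      fix y assume xy: "(x, y) \<in> Ri F"
      then have y: "y \<in> carrier F" using gen_facts(1)[OF g] by auto
      have "(cls F x, cls F y) \<in> leq (rho_hat F)" using leq_iff[OF g x y] xy by simp
      then have "cls F y \<in> ?IA \<longrightarrow> cls F y \<in> ?IB" using h by (auto simp: rel_imp_def)
      then show "y \<in> carrier F - ?A \<union> ?B" using IImp y by auto
    qed
  next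
    assume h: "x \<in> mtruth F V (trans_t (IImp a b))"
    show "cls F x \<in> itruth (rho_hat F) W (IImp a b)"
      unfolding itruth.simps rel_imp_def
    proof (intro CollectI conjI allI impI)
      show "cls F x \<in> lcarrier (rho_hat F)" using x by (auto simp: rho_hat_def)
      fix d assume d: "(cls F x, d) \<in> leq (rho_hat F)" "d \<in> ?IA"
      obtain y where y: "y \<in> carrier F" "d = cls F y" using leq_range[OF d(1)] by auto
      have "(x, y) \<in> Ri F" using leq_iff[OF g x y(1)] d y by simp
      then have "y \<in> carrier F - ?A \<union> ?B" using h by (auto simp: box_rel_def)
      then show "d \<in> ?IB" using IImp y d by auto
    qed
  qed
  then show ?case using sub up_box[OF g] by simp
next
  case (ILolli a b)
  let ?A = "mtruth F V (trans_t a)" and ?B = "mtruth F V (trans_t b)"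
  let ?IA = "itruth (rho_hat F) W a" and ?IB = "itruth (rho_hat F) W b"
  have sub: "itruth (rho_hat F) W (ILolli a b) \<subseteq> cls F ` carrier F"
    by (auto simp: rel_imp_def rho_hat_def)
  have RmC: "\<And>u z. (u, z) \<in> Rm_star F \<Longrightarrow> z \<in> carrier F"
    using gen_facts(2)[OF g] unfolding Rm_star_def by auto
  have "cls F x \<in> itruth (rho_hat F) W (ILolli a b) \<longleftrightarrow> x \<in> mtruth F V (trans_t (ILolli a b))"
    if x: "x \<in> carrier F" for x
  proof
    assume h: "cls F x \<in> itruth (rho_hat F) W (ILolli a b)"
    show "x \<in> mtruth F V (trans_t (ILolli a b))"
      unfolding trans_t.simps mtruth.simps box_rel_def
    proof (rule CollectI, intro conjI allI impI x)
      fix w assume xw: "(x, w) \<in> Ri F"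
      then have w: "w \<in> carrier F" using gen_facts(1)[OF g] by auto
      show "w \<in> {w \<in> carrier F. \<forall>z. (w, z) \<in> Rm F \<longrightarrow> z \<in> carrier F - ?A \<union> ?B}"
      proof (intro CollectI conjI allI impI w)
        fix z assume wz: "(w, z) \<in> Rm F"
        then have z: "z \<in> carrier F" using gen_facts(2)[OF g] by auto
        have "(x, z) \<in> Rm_star F" using xw wz by (auto simp: Rm_star_def)
        then have "(cls F x, cls F z) \<in> lrel (rho_hat F)"
          using lrel_iff[OF g x z] cls_self[OF g z] by auto
        then have "cls F z \<in> ?IA \<longrightarrow> cls F z \<in> ?IB" using h by (auto simp: rel_imp_def)
        then show "z \<in> carrier F - ?A \<union> ?B" using ILolli z by auto
      qed
    qed
  next
    assume h: "x \<in> mtruth F V (trans_t (ILolli a b))"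
    show "cls F x \<in> itruth (rho_hat F) W (ILolli a b)"
      unfolding itruth.simps rel_imp_def
    proof (intro CollectI conjI allI impI)
      show "cls F x \<in> lcarrier (rho_hat F)" using x by (auto simp: rho_hat_def)
      fix d assume d: "(cls F x, d) \<in> lrel (rho_hat F)" "d \<in> ?IA"
      obtain y where y: "y \<in> carrier F" "d = cls F y" using lrel_range[OF d(1)] by auto
      obtain y' where y': "y' \<in> cls F y" "(x, y') \<in> Rm_star F"
        using lrel_iff[OF g x y(1)] d y by auto
      have y'c: "y' \<in> carrier F" using y' unfolding cls_def by auto
      have eq: "cls F y' = cls F y" using cls_eq[OF g y'c y(1)] y' unfolding cls_def by auto
      have "y' \<in> carrier F - ?A \<union> ?B" using h y'(2) by (auto simp: box_rel_def Rm_star_def)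
      moreover have "cls F y' \<in> ?IA" using d y eq by simp
      then have "y' \<in> ?A" using ILolli y'c by blast
      ultimately have "y' \<in> ?B" by blast
      then have "cls F y' \<in> ?IB" using ILolli y'c by blast
      then show "d \<in> ?IB" using y eq by simp
    qed
  qed
  then show ?case using sub up_box[OF g] by simp
qed

lemma valid_iff:
  assumes g: "general_S4K_frame F"
  shows "mvalid F (trans_t \<phi>) \<longleftrightarrow> ivalid (rho_hat F) \<phi>"
proof
  assume m: "mvalid F (trans_t \<phi>)"
  show "ivalid (rho_hat F) \<phi>" unfolding ivalid_def
  proof (intro allI impI)
    fix W :: "nat \<Rightarrow> 'a set set" assume W: "\<forall>p. W p \<in> ladm (rho_hat F)"
    define V where "V p = (SOME b. b \<in> Adm F \<and> W p = cls F ` box_rel (carrier F) (Ri F) b)" for p :: nat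
    have V: "V p \<in> Adm F \<and> W p = cls F ` box_rel (carrier F) (Ri F) (V p)" for p :: nat
    proof -
      have "\<exists>b. b \<in> Adm F \<and> W p = cls F ` box_rel (carrier F) (Ri F) b"
        using W by (simp add: rho_hat_def) blast
      then show ?thesis unfolding V_def by (rule someI_ex)
    qed
    have M: "mtruth F V (trans_t \<phi>) = carrier F" using m V unfolding mvalid_def by auto
    note T = truth[OF g, of W V \<phi>]
    show "itruth (rho_hat F) W \<phi> = lcarrier (rho_hat F)"
      using T V M by (auto simp: rho_hat_def)
  qed
next
  assume i: "ivalid (rho_hat F) \<phi>"
  show "mvalid F (trans_t \<phi>)" unfolding mvalid_def
  proof (intro allI impI)
    fix V :: "nat \<Rightarrow> 'a set" assume V: "\<forall>p. V p \<in> Adm F"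
    define W where "W p = cls F ` box_rel (carrier F) (Ri F) (V p)" for p :: nat
    have "W p \<in> ladm (rho_hat F)" for p using V unfolding W_def rho_hat_def by auto
    then have I: "itruth (rho_hat F) W \<phi> = cls F ` carrier F"
      using i unfolding ivalid_def by (auto simp: rho_hat_def)
    note T = truth[OF g, of W V \<phi>]
    show "mtruth F V (trans_t \<phi>) = carrier F"
      using T I unfolding W_def up_def by auto
  qed
qed

theorem proposition4p13:
  fixes \<Theta> :: "mfm set" and \<C> :: "'a s4k_frame set"
  assumes "S4K_logic \<Theta>"
    and "\<forall>F\<in>\<C>. general_S4K_frame F"
    and "\<forall>\<chi>. \<chi> \<in> \<Theta> \<longleftrightarrow> (\<forall>F\<in>\<C>. mvalid F \<chi>)"
  shows "\<forall>\<phi>. \<phi> \<in> rho_logic \<Theta> \<longleftrightarrow> (\<forall>G\<in>rho_hat ` \<C>. ivalid G \<phi>)"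
proof (intro allI)
  fix \<phi>
  have "\<phi> \<in> rho_logic \<Theta> \<longleftrightarrow> (\<forall>F\<in>\<C>. mvalid F (trans_t \<phi>))"
    using assms(3) by (simp add: rho_logic_def)
  also have "\<dots> \<longleftrightarrow> (\<forall>F\<in>\<C>. ivalid (rho_hat F) \<phi>)"
    using assms(2) valid_iff by blast
  finally show "\<phi> \<in> rho_logic \<Theta> \<longleftrightarrow> (\<forall>G\<in>rho_hat ` \<C>. ivalid G \<phi>)" by simp
qed

end
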